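(* Let $d,n\ge2$ and $\gamma=[1^{(0)}\;2^{(0)}\;\ldots\;(n-1)^{(0)}][n^{(0)}]_{d-1}\in G(d,d,n)$. For $1<a\le n$ and $s\in[d-1]$, we have $[1^{(0)}]_s[a^{(0)}]_{d-s}\le_T\gamma$ if and only if $a=n$ and $s=1$.
   Context: $G(d,d,n)$ is the group of $n\times n$ monomial matrices with $d$-th roots of unity as nonzero entries whose product is $1$, viewed as permutations of colored integers $k^{(s)}=\zeta^se_k$ ($\zeta=e^{2\pi i/d}$, $k\in[n]$, $s\in\mathbb{Z}/d$); products composed right to left. For $s\in[d-1]$ the balanced cycle $[k_1^{(t_1)}\ldots k_r^{(t_r)}]_s$ is the cycle $(k_1^{(t_1)}\ldots k_r^{(t_r)}\,k_1^{(t_1+s)}\ldots k_r^{(t_r+s)}\ldots k_1^{(t_1+(d-1)s)}\ldots k_r^{(t_r+(d-1)s)})$; subscript $1$ omitted. With $T$ the reflections, $\ell_T$ is absolute length (minimal number of reflection factors) and $u\le_Tv$ iff $\ell_T(v)=\ell_T(u)+\ell_T(u^{-1}v)$. *)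

theory Defs
  imports Complex_Main "HOL-Combinatorics.Permutations"
begin

text \<open>Colored integers k^(s) are pairs (k, s) with k in {1..n}, s in {0..<d}.
  Elements of G(d,d,n) are bijections of nat x nat acting on the colored integers
  (and as identity outside them). Products compose right to left: u v = u o v.\<close>

definition colored :: "nat \<Rightarrow> nat \<Rightarrow> (nat \<times> nat) set" where
  "colored d n = {1..n} \<times> {0..<d}"

definition Gddn :: "nat \<Rightarrow> nat \<Rightarrow> (nat \<times> nat \<Rightarrow> nat \<times> nat) set" where
  "Gddn d n = {f. \<exists>\<sigma> c. \<sigma> permutes {1..n} \<and> (\<forall>k. c k < d) \<and>
      (\<Sum>k\<in>{1..n}. c k) mod d = 0 \<and>
      (\<forall>k s. f (k, s) = (if k \<in> {1..n} \<and> s < d then (\<sigma> k, (s + c k) mod d) else (k, s)))}"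

text \<open>Monomial matrix of f acting on C^n (vectors indexed by {1..n}):
  f e_k = zeta^(c k) e_(sigma k), where f (k,0) = (sigma k, c k).\<close>

definition zeta :: "nat \<Rightarrow> complex" where
  "zeta d = exp (2 * of_real pi * \<i> / of_nat d)"

definition mat_act :: "nat \<Rightarrow> nat \<Rightarrow> (nat \<times> nat \<Rightarrow> nat \<times> nat) \<Rightarrow> (nat \<Rightarrow> complex) \<Rightarrow> (nat \<Rightarrow> complex)" where
  "mat_act d n f v = (\<lambda>j. \<Sum>k\<in>{1..n}. if fst (f (k, 0)) = j then zeta d ^ snd (f (k, 0)) * v k else 0)"

definition is_reflection :: "nat \<Rightarrow> nat \<Rightarrow> (nat \<times> nat \<Rightarrow> nat \<times> nat) \<Rightarrow> bool" where
  "is_reflection d n f \<longleftrightarrow> f \<noteq> id \<and>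
     (\<exists>\<alpha> :: nat \<Rightarrow> complex. (\<exists>k\<in>{1..n}. \<alpha> k \<noteq> 0) \<and>
        (\<forall>v. (\<Sum>k\<in>{1..n}. \<alpha> k * v k) = 0 \<longrightarrow> (\<forall>j\<in>{1..n}. mat_act d n f v j = v j)))"

definition reflections :: "nat \<Rightarrow> nat \<Rightarrow> (nat \<times> nat \<Rightarrow> nat \<times> nat) set" where
  "reflections d n = {r \<in> Gddn d n. is_reflection d n r}"

definition abs_len :: "nat \<Rightarrow> nat \<Rightarrow> (nat \<times> nat \<Rightarrow> nat \<times> nat) \<Rightarrow> nat" where
  "abs_len d n w = (LEAST k. \<exists>rs. length rs = k \<and> set rs \<subseteq> reflections d n \<and> w = foldr (\<circ>) rs id)"

definition abs_le :: "nat \<Rightarrow> nat \<Rightarrow> (nat \<times> nat \<Rightarrow> nat \<times> nat) \<Rightarrow> (nat \<times> nat \<Rightarrow> nat \<times> nat) \<Rightarrow> bool" where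
  "abs_le d n u v \<longleftrightarrow> abs_len d n v = abs_len d n u + abs_len d n (inv u \<circ> v)"

text \<open>Balanced cycle [k_1^(t_1) ... k_r^(t_r)]_s given as list [(k_1,t_1),...,(k_r,t_r)]:
  k_i^(t) maps to k_(i+1)^(t + t_(i+1) - t_i), and k_r^(t) maps to k_1^(t + s + t_1 - t_r)
  (colors mod d); identity elsewhere.\<close>

definition bcyc :: "nat \<Rightarrow> nat \<Rightarrow> (nat \<times> nat) list \<Rightarrow> (nat \<times> nat \<Rightarrow> nat \<times> nat)" where
  "bcyc d s ks = (\<lambda>(k, t).
     if t < d \<and> (\<exists>i<length ks. fst (ks ! i) = k) then
       (let i = (LEAST i. i < length ks \<and> fst (ks ! i) = k);
            j = Suc i mod length ks;
            sh = (if Suc i = length ks then int s else 0)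
        in (fst (ks ! j), nat ((int t + sh + int (snd (ks ! j)) - int (snd (ks ! i))) mod int d)))
     else (k, t))"

end

theory Submission imports Defs "HOL-Analysis.Analysis" begin

lemma zeta_pow: "zeta d ^ m = exp (2 * of_real pi * \<i> * of_nat m / of_nat d)"
  unfolding zeta_def by (simp add: exp_of_nat_mult[symmetric] mult_ac)

lemma zeta_pow_d: "d > 0 \<Longrightarrow> zeta d ^ d = 1"
  by (simp add: zeta_pow)

lemma zeta_nz: "zeta d \<noteq> 0" by (simp add: zeta_def)

lemma zeta_pow_eq1: assumes "d > 0" "zeta d ^ m = 1" shows "d dvd m"
proof -
  from assms have "exp (2 * of_real pi * \<i> * of_nat m / of_nat d) = 1" by (simp add: zeta_pow)
  then obtain j :: int where j: "Im (2 * of_real pi * \<i> * of_nat m / of_nat d) = of_int (2*j) * pi"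
    by (auto simp: exp_eq_1)
  have "Im (2 * of_real pi * \<i> * of_nat m / of_nat d) = 2 * pi * m / d"
    by (simp add: Im_divide_of_nat)
  with j have "2 * pi * m / d = 2 * j * pi" by simp
  then have "real m = real d * j" using assms pi_gt_zero by (simp add: field_simps)
  then have "int m = int d * j" by (metis of_int_eq_iff of_int_mult of_int_of_nat_eq)
  then show ?thesis by (metis dvd_triv_left int_dvd_int_iff)
qed

lemma zeta_pow_mod: "d > 0 \<Longrightarrow> zeta d ^ (m mod d) = zeta d ^ m"
proof -
  assume "d > 0"
  have "zeta d ^ m = zeta d ^ (d * (m div d) + m mod d)" by simp
  also have "\<dots> = (zeta d ^ d) ^ (m div d) * zeta d ^ (m mod d)" by (simp only: power_add power_mult)
  also have "\<dots> = zeta d ^ (m mod d)" by (simp add: zeta_pow_d[OF \<open>d>0\<close>])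
  finally show ?thesis by simp
qed

definition FF :: "nat \<Rightarrow> (nat \<Rightarrow> complex) \<Rightarrow> nat \<times> nat \<Rightarrow> complex" where
  "FF d v = (\<lambda>(k,t). v k / zeta d ^ t)"

lemma refl_F:
  assumes "r \<in> Gddn d n" "d > 0" "\<forall>j\<in>{1..n}. mat_act d n r v j = v j"
  shows "FF d v \<circ> r = FF d v"
proof -
  obtain \<sigma> c where s: "\<sigma> permutes {1..n}" and c: "\<forall>k. c k < d"
    and r: "\<forall>k s. r (k, s) = (if k \<in> {1..n} \<and> s < d then (\<sigma> k, (s + c k) mod d) else (k, s))"
    using assms(1) unfolding Gddn_def by blast
  have hv: "v (\<sigma> k) = zeta d ^ c k * v k" if k: "k \<in> {1..n}" for k
  proof -
    have "mat_act d n r v (\<sigma> k) = (\<Sum>k'\<in>{1..n}. if k' = k then zeta d ^ c k * v k else 0)"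
      unfolding mat_act_def
    proof (rule sum.cong[OF refl])
      fix k' assume k': "k' \<in> {1..n}"
      have "(\<sigma> k' = \<sigma> k) = (k' = k)" using permutes_inj[OF s] by (metis injD)
      then show "(if fst (r (k', 0)) = \<sigma> k then zeta d ^ snd (r (k', 0)) * v k' else 0) =
          (if k' = k then zeta d ^ c k * v k else 0)"
        using r k' c assms(2) by auto
    qed
    also have "\<dots> = zeta d ^ c k * v k" using k by simp
    finally show ?thesis using assms(3) k permutes_in_image[OF s] by auto
  qed
  show ?thesis
  proof
    fix x show "(FF d v \<circ> r) x = FF d v x"
    proof (cases x)
      case (Pair k t)
      show ?thesis
      proof (cases "k \<in> {1..n} \<and> t < d")
        case True
        then have "(FF d v \<circ> r) x = v (\<sigma> k) / zeta d ^ ((t + c k) mod d)"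
          using r Pair by (simp add: FF_def)
        also have "\<dots> = zeta d ^ c k * v k / (zeta d ^ t * zeta d ^ c k)"
          using True hv assms(2) by (simp add: zeta_pow_mod power_add)
        also have "\<dots> = v k / zeta d ^ t" using zeta_nz by (simp add: field_simps)
        finally show ?thesis using Pair by (simp add: FF_def)
      next
        case False then show ?thesis using r Pair by auto
      qed
    qed
  qed
qed

lemma common_zero:
  fixes \<alpha>s :: "(nat \<Rightarrow> complex) list"
  shows "length \<alpha>s = m \<Longrightarrow> finite I \<Longrightarrow> m < card I \<Longrightarrow>
    \<exists>v. (\<exists>k\<in>I. v k \<noteq> 0) \<and> (\<forall>\<alpha>\<in>set \<alpha>s. (\<Sum>k\<in>I. \<alpha> k * v k) = 0)"
proof (induction m arbitrary: \<alpha>s I)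
  case 0
  then have "I \<noteq> {}" by auto
  then show ?case using 0 by (intro exI[of _ "\<lambda>_. 1"]) auto
next
  case (Suc m)
  then obtain \<alpha> rest where ar: "\<alpha>s = \<alpha> # rest" by (cases \<alpha>s) auto
  have lr: "length rest = m" using Suc.prems(1) ar by simp
  show ?case
  proof (cases "\<forall>k\<in>I. \<alpha> k = 0")
    case True
    from Suc.IH[OF lr Suc.prems(2)] Suc.prems(3) obtain v where
      "(\<exists>k\<in>I. v k \<noteq> 0)" "(\<forall>\<alpha>\<in>set rest. (\<Sum>k\<in>I. \<alpha> k * v k) = 0)" by auto
    then show ?thesis using True ar by (intro exI[of _ v]) auto
  next
    case False
    then obtain p where p: "p \<in> I" "\<alpha> p \<noteq> 0" by auto
    define I' where "I' = I - {p}"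
    have fI': "finite I'" using Suc.prems(2) by (simp add: I'_def)
    have cI': "card I' = card I - 1" using p Suc.prems(2) by (simp add: I'_def)
    define \<alpha>s' where "\<alpha>s' = map (\<lambda>\<beta> k. \<beta> k - \<beta> p * \<alpha> k / \<alpha> p) rest"
    have l': "length \<alpha>s' = m" using lr by (simp add: \<alpha>s'_def)
    have "m < card I'" using Suc.prems(3) cI' by simp
    from Suc.IH[OF l' fI' this] obtain w where w1: "\<exists>k\<in>I'. w k \<noteq> 0"
      and w2: "\<forall>\<beta>\<in>set \<alpha>s'. (\<Sum>k\<in>I'. \<beta> k * w k) = 0" by auto
    define v where "v = w(p := - (\<Sum>k\<in>I'. \<alpha> k * w k) / \<alpha> p)"
    have vI': "(\<Sum>k\<in>I'. f k * v k) = (\<Sum>k\<in>I'. f k * w k)" for f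
      by (rule sum.cong) (auto simp: v_def I'_def)
    have split: "(\<Sum>k\<in>I. f k * v k) = f p * v p + (\<Sum>k\<in>I'. f k * w k)" for f
      using sum.remove[OF Suc.prems(2) p(1), of "\<lambda>k. f k * v k"] vI' by (simp add: I'_def)
    have A: "(\<Sum>k\<in>I. \<alpha> k * v k) = 0" using split[of \<alpha>] p(2) by (simp add: v_def)
    have B: "(\<Sum>k\<in>I. \<beta> k * v k) = 0" if "\<beta> \<in> set rest" for \<beta>
    proof -
      have "(\<Sum>k\<in>I'. (\<beta> k - \<beta> p * \<alpha> k / \<alpha> p) * w k) = 0"
        using w2 that by (auto simp: \<alpha>s'_def)
      then have "(\<Sum>k\<in>I'. \<beta> k * w k) - \<beta> p / \<alpha> p * (\<Sum>k\<in>I'. \<alpha> k * w k) = 0"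
        by (simp add: algebra_simps sum_subtractf sum_distrib_left)
      then show ?thesis using split[of \<beta>] p(2) by (simp add: v_def field_simps)
    qed
    have C: "\<exists>k\<in>I. v k \<noteq> 0" using w1 by (auto simp: v_def I'_def)
    show ?thesis using A B C ar by (intro exI[of _ v]) auto
  qed
qed

lemma fold_F: "\<forall>r\<in>set rs. FF d v \<circ> r = FF d v \<Longrightarrow> FF d v \<circ> foldr (\<circ>) rs id = FF d v"
proof (induction rs)
  case Nil then show ?case by simp
next
  case (Cons r rs)
  have "FF d v \<circ> foldr (\<circ>) (r # rs) id = (FF d v \<circ> r) \<circ> foldr (\<circ>) rs id"
    by (simp only: foldr.simps o_assoc o_apply)
  also have "\<dots> = FF d v \<circ> foldr (\<circ>) rs id"
  proof -
    have h: "FF d v \<circ> r = FF d v" using Cons.prems by (simp add: comp_def)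
    show ?thesis by (simp only: h)
  qed
  also have "\<dots> = FF d v" by (rule Cons.IH) (use Cons.prems in simp)
  finally show ?case .
qed

lemma foldr_comp_gen: "foldr (\<circ>) xs g = foldr (\<circ>) xs id \<circ> g"
  by (induction xs) (auto simp: o_assoc)

lemma foldr_comp_append: "foldr (\<circ>) (xs @ ys) id = foldr (\<circ>) xs id \<circ> foldr (\<circ>) ys id"
  by (simp add: foldr_comp_gen[of xs "foldr (\<circ>) ys id"])

lemma foldr_single: "foldr (\<circ>) [x] id = x" by (simp add: fun_eq_iff)

lemma foldr_snoc: "foldr (\<circ>) (xs @ [x]) id = foldr (\<circ>) xs id \<circ> x"
  by (simp only: foldr_comp_append foldr_single)

definition RA :: "nat \<Rightarrow> nat \<Rightarrow> (nat \<times> nat \<Rightarrow> nat \<times> nat) \<Rightarrow> nat \<Rightarrow> complex" where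
  "RA d n r = (SOME \<alpha>. (\<exists>k\<in>{1..n}. \<alpha> k \<noteq> 0) \<and>
        (\<forall>v. (\<Sum>k\<in>{1..n}. \<alpha> k * v k) = 0 \<longrightarrow> (\<forall>j\<in>{1..n}. mat_act d n r v j = v j)))"

lemma RA_spec: "r \<in> reflections d n \<Longrightarrow> (\<Sum>k\<in>{1..n}. RA d n r k * v k) = 0 \<Longrightarrow>
   (\<forall>j\<in>{1..n}. mat_act d n r v j = v j)"
proof -
  assume r: "r \<in> reflections d n" and h: "(\<Sum>k\<in>{1..n}. RA d n r k * v k) = 0"
  from r have "\<exists>\<alpha>. (\<exists>k\<in>{1..n}. \<alpha> k \<noteq> 0) \<and>
        (\<forall>v. (\<Sum>k\<in>{1..n}. \<alpha> k * v k) = 0 \<longrightarrow> (\<forall>j\<in>{1..n}. mat_act d n r v j = v j))"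
    unfolding reflections_def is_reflection_def by blast
  from someI_ex[OF this] h show ?thesis unfolding RA_def by blast
qed

lemma lower_fix:
  assumes "d > 0" "set rs \<subseteq> reflections d n" "length rs < n"
  shows "\<exists>v. (\<exists>k\<in>{1..n}. v k \<noteq> 0) \<and> FF d v \<circ> foldr (\<circ>) rs id = FF d v"
proof -
  obtain v where v1: "\<exists>k\<in>{1..n}. v k \<noteq> 0"
    and v2: "\<forall>\<alpha>\<in>set (map (RA d n) rs). (\<Sum>k\<in>{1..n}. \<alpha> k * v k) = 0"
    using common_zero[of "map (RA d n) rs" "length rs" "{1..n}"] assms(3) by auto
  have "\<forall>r\<in>set rs. FF d v \<circ> r = FF d v"
  proof
    fix r assume r: "r \<in> set rs"
    then have rr: "r \<in> reflections d n" using assms(2) by auto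
    then have "r \<in> Gddn d n" by (simp add: reflections_def)
    moreover have "\<forall>j\<in>{1..n}. mat_act d n r v j = v j" using RA_spec[OF rr] v2 r by auto
    ultimately show "FF d v \<circ> r = FF d v" using refl_F assms(1) by blast
  qed
  then show ?thesis using v1 fold_F by blast
qed

definition expr :: "nat \<Rightarrow> nat \<Rightarrow> (nat \<times> nat \<Rightarrow> nat \<times> nat) \<Rightarrow> bool" where
  "expr d n w \<longleftrightarrow> (\<exists>rs. set rs \<subseteq> reflections d n \<and> w = foldr (\<circ>) rs id)"

lemma abs_len_le: "set rs \<subseteq> reflections d n \<Longrightarrow> w = foldr (\<circ>) rs id \<Longrightarrow> abs_len d n w \<le> length rs"
  unfolding abs_len_def by (rule Least_le) blast

lemma abs_len_ex: "expr d n w \<Longrightarrow> \<exists>rs. length rs = abs_len d n w \<and> set rs \<subseteq> reflections d n \<and> w = foldr (\<circ>) rs id"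
  unfolding abs_len_def expr_def by (rule LeastI_ex) blast

lemma abs_len_ge:
  assumes "expr d n w" "d > 0" "\<And>v. FF d v \<circ> w = FF d v \<Longrightarrow> \<forall>k\<in>{1..n}. v k = 0"
  shows "n \<le> abs_len d n w"
proof (rule ccontr)
  assume "\<not> n \<le> abs_len d n w"
  moreover obtain rs where "length rs = abs_len d n w" "set rs \<subseteq> reflections d n" "w = foldr (\<circ>) rs id"
    using abs_len_ex[OF assms(1)] by blast
  ultimately show False using lower_fix[OF assms(2), of rs n] assms(3) by force
qed

lemma abs_len_sub:
  assumes "expr d n f" "expr d n g"
  shows "abs_len d n (f \<circ> g) \<le> abs_len d n f + abs_len d n g"
proof -
  obtain rs where 1: "length rs = abs_len d n f" "set rs \<subseteq> reflections d n" "f = foldr (\<circ>) rs id"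
    using abs_len_ex[OF assms(1)] by blast
  obtain qs where 2: "length qs = abs_len d n g" "set qs \<subseteq> reflections d n" "g = foldr (\<circ>) qs id"
    using abs_len_ex[OF assms(2)] by blast
  have "abs_len d n (f \<circ> g) \<le> length (rs @ qs)"
  proof (rule abs_len_le)
    show "set (rs @ qs) \<subseteq> reflections d n" using 1 2 by auto
    show "f \<circ> g = foldr (\<circ>) (rs @ qs) id" by (simp only: 1(3) 2(3) foldr_comp_append)
  qed
  then show ?thesis using 1 2 by simp
qed

lemma abs_len_pos: "expr d n w \<Longrightarrow> w \<noteq> id \<Longrightarrow> 1 \<le> abs_len d n w"
proof -
  assume e: "expr d n w" and w: "w \<noteq> id"
  obtain rs where "length rs = abs_len d n w" "w = foldr (\<circ>) rs id" using abs_len_ex[OF e] by blast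
  then show ?thesis using w by (cases rs) auto
qed

lemma zeta_ne1: "0 < m \<Longrightarrow> m < d \<Longrightarrow> zeta d ^ m \<noteq> 1"
  using zeta_pow_eq1[of d m] dvd_imp_le[of d m] by auto

lemma sum_single: "finite A \<Longrightarrow> p \<in> A \<Longrightarrow> (\<And>k. k \<in> A \<Longrightarrow> f k = (if k = p then x else 0)) \<Longrightarrow> sum f A = x"
  by (simp add: sum.cong[of A A f "\<lambda>k. if k = p then x else 0"])

definition tr :: "nat \<Rightarrow> nat \<Rightarrow> nat \<Rightarrow> nat \<Rightarrow> nat \<times> nat \<Rightarrow> nat \<times> nat" where
  "tr d i j c = (\<lambda>(k,t). if t < d \<and> k = i then (j, (t + c) mod d)
      else if t < d \<and> k = j then (i, (t + d - c) mod d) else (k, t))"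

lemma tr_Gddn:
  assumes "d > 0" "i \<noteq> j" "i \<in> {1..n}" "j \<in> {1..n}" "c < d"
  shows "tr d i j c \<in> Gddn d n"
proof -
  define col where "col k = (if k = i then c else if k = j then (d - c) mod d else 0)" for k
  have c1: "\<forall>k. col k < d" using assms by (simp add: col_def)
  have "(\<Sum>k\<in>{1..n}. col k) = (\<Sum>k\<in>{1..n}. (if k = i then c else 0) + (if k = j then (d - c) mod d else 0))"
    by (rule sum.cong) (use assms in \<open>auto simp: col_def\<close>)
  also have "\<dots> = c + (d - c) mod d" using assms by (simp add: sum.distrib)
  finally have sm: "(\<Sum>k\<in>{1..n}. col k) = c + (d - c) mod d" .
  have "(c + (d - c) mod d) mod d = 0"
  proof (cases "c = 0")
    case True then show ?thesis by simp
  next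
    case False then have "(d - c) mod d = d - c" using assms by simp
    then show ?thesis using assms by simp
  qed
  with sm have s0: "(\<Sum>k\<in>{1..n}. col k) mod d = 0" by simp
  have eq: "\<forall>k s. tr d i j c (k, s) = (if k \<in> {1..n} \<and> s < d then (Transposition.transpose i j k, (s + col k) mod d) else (k, s))"
  proof (intro allI)
    fix k s
    show "tr d i j c (k, s) = (if k \<in> {1..n} \<and> s < d then (Transposition.transpose i j k, (s + col k) mod d) else (k, s))"
    proof (cases "s < d")
      case False then show ?thesis by (simp add: tr_def)
    next
      case True
      show ?thesis
      proof (cases "k = i")
        case True then show ?thesis using \<open>s<d\<close> assms by (simp add: tr_def col_def)
      next
        case ki: False
        show ?thesis
        proof (cases "k = j")
          case True then show ?thesis using \<open>s<d\<close> assms ki by (simp add: tr_def col_def mod_add_right_eq)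
        next
          case False then show ?thesis using \<open>s<d\<close> assms ki by (simp add: tr_def col_def)
        qed
      qed
    qed
  qed
  show ?thesis unfolding Gddn_def mem_Collect_eq
    by (rule exI[of _ "Transposition.transpose i j"], rule exI[of _ col])
       (use permutes_swap_id[OF assms(3,4)] c1 s0 eq in blast)
qed

lemma tr_refl:
  assumes "d > 0" "i \<noteq> j" "i \<in> {1..n}" "j \<in> {1..n}" "c < d"
  shows "tr d i j c \<in> reflections d n"
proof -
  have ne: "tr d i j c \<noteq> id"
  proof
    assume "tr d i j c = id"
    then have "tr d i j c (i, 0) = (i, 0)" by simp
    then show False using assms by (simp add: tr_def)
  qed
  define \<alpha> where "\<alpha> k = (if k = i then zeta d ^ c else if k = j then -1 else (0::complex))" for k
  have a1: "\<exists>k\<in>{1..n}. \<alpha> k \<noteq> 0" using assms zeta_nz by (auto simp: \<alpha>_def intro!: bexI[of _ i])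
  have a2: "\<forall>m\<in>{1..n}. mat_act d n (tr d i j c) v m = v m" if h: "(\<Sum>k\<in>{1..n}. \<alpha> k * v k) = 0" for v
  proof -
    have "(\<Sum>k\<in>{1..n}. \<alpha> k * v k) = (\<Sum>k\<in>{1..n}. (if k = i then zeta d ^ c * v i else 0) + (if k = j then - v j else 0))"
      by (rule sum.cong) (use assms in \<open>auto simp: \<alpha>_def\<close>)
    also have "\<dots> = zeta d ^ c * v i - v j" using assms by (simp add: sum.distrib)
    finally have vj: "v j = zeta d ^ c * v i" using h by simp
    have fs: "tr d i j c (k, 0) = (if k = i then j else if k = j then i else k,
               if k = i then c else if k = j then (d - c) mod d else 0)" for k
      using assms by (auto simp: tr_def)
    show ?thesis
    proof
      fix m assume m: "m \<in> {1..n}"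
      show "mat_act d n (tr d i j c) v m = v m"
      proof (cases "m = j")
        case True
        have "mat_act d n (tr d i j c) v m = zeta d ^ c * v i"
          unfolding mat_act_def by (rule sum_single[of _ i]) (use assms True in \<open>auto simp: fs\<close>)
        then show ?thesis using vj True by simp
      next
        case mj: False
        show ?thesis
        proof (cases "m = i")
          case True
          have "mat_act d n (tr d i j c) v m = zeta d ^ ((d - c) mod d) * v j"
            unfolding mat_act_def by (rule sum_single[of _ j]) (use assms True in \<open>auto simp: fs\<close>)
          also have "\<dots> = zeta d ^ (d - c) * zeta d ^ c * v i" using vj assms by (simp add: zeta_pow_mod)
          also have "\<dots> = zeta d ^ d * v i" using assms by (simp add: power_add[symmetric])
          finally show ?thesis using True zeta_pow_d assms by simp
        next
          case False
          have "mat_act d n (tr d i j c) v m = zeta d ^ 0 * v m"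
            unfolding mat_act_def by (rule sum_single[of _ m]) (use assms False mj m in \<open>auto simp: fs\<close>)
          then show ?thesis by simp
        qed
      qed
    qed
  qed
  show ?thesis unfolding reflections_def is_reflection_def mem_Collect_eq
    using tr_Gddn[OF assms] ne a1 a2 by (intro conjI exI[of _ \<alpha>]) auto
qed

lemma mod_add_d: "(x::nat) < d \<Longrightarrow> (x + d) mod d = x" by simp

lemma tr_inv: assumes "d > 0" "c < d" "i \<noteq> j" shows "tr d i j c \<circ> tr d i j c = id"
proof
  fix x show "(tr d i j c \<circ> tr d i j c) x = id x"
  proof (cases x)
    case (Pair k t)
    have A: "((t' + c) mod d + d - c) mod d = t'" if "t' < d" for t'
    proof (cases "t' + c < d")
      case True
      then have "(t' + c) mod d = t' + c" by simp
      then have "(t' + c) mod d + d - c = t' + d" by simp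
      then show ?thesis using that by (simp add: mod_add_d)
    next
      case False
      have e: "t' + c = (t' + c - d) + d" using False by simp
      have "(t' + c) mod d = (t' + c - d) mod d" by (subst e) (rule mod_add_self2)
      also have "\<dots> = t' + c - d" using that assms by simp
      finally have "(t' + c) mod d + d - c = t'" using False by simp
      then show ?thesis using that by simp
    qed
    have B: "((t' + d - c) mod d + c) mod d = t'" if "t' < d" for t'
    proof -
      have "((t' + d - c) mod d + c) mod d = (t' + d - c + c) mod d" by (simp add: mod_add_left_eq)
      also have "t' + d - c + c = t' + d" using assms by simp
      finally show ?thesis using that by (simp add: mod_add_d)
    qed
    show ?thesis
    proof (cases "t < d")
      case False then show ?thesis using Pair by (simp add: tr_def)
    next
      case True
      have tm: "(t + c) mod d < d" "(t + d - c) mod d < d" using assms by auto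
      show ?thesis
      proof (cases "k = i")
        case True then show ?thesis using Pair A[OF \<open>t<d\<close>] tm assms by (simp add: tr_def)
      next
        case ki: False
        show ?thesis
        proof (cases "k = j")
          case True then show ?thesis using Pair B[OF \<open>t<d\<close>] tm assms ki by (simp add: tr_def)
        next
          case False then show ?thesis using Pair \<open>t<d\<close> ki by (simp add: tr_def)
        qed
      qed
    qed
  qed
qed


definition cyc :: "nat \<Rightarrow> nat \<Rightarrow> nat \<times> nat \<Rightarrow> nat \<times> nat" where
  "cyc d m = (\<lambda>(k,t). if t < d \<and> 1 \<le> k \<and> k < m then (Suc k, t)
      else if t < d \<and> k = m \<and> 1 \<le> m then (1, t) else (k, t))"

lemma cyc_Suc: "1 \<le> m \<Longrightarrow> cyc d (Suc m) = cyc d m \<circ> tr d m (Suc m) 0"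
proof
  fix x assume m: "1 \<le> m"
  show "cyc d (Suc m) x = (cyc d m \<circ> tr d m (Suc m) 0) x"
  proof (cases x)
    case (Pair k t)
    show ?thesis
    proof (cases "t < d")
      case False then show ?thesis using Pair by (simp add: tr_def cyc_def)
    next
      case True
      then show ?thesis using Pair m
        by (cases "k = m"; cases "k = Suc m"; cases "k < m"; simp add: tr_def cyc_def)
    qed
  qed
qed

lemma cyc_fold: "1 \<le> m \<Longrightarrow> cyc d m = foldr (\<circ>) (map (\<lambda>k. tr d k (Suc k) 0) [1..<m]) id"
proof (induction m)
  case 0 then show ?case by simp
next
  case (Suc m)
  show ?case
  proof (cases "m = 0")
    case True then show ?thesis by (auto simp: cyc_def)
  next
    case False
    then have "[1..<Suc m] = [1..<m] @ [m]" by simp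
    have IH: "cyc d m = foldr (\<circ>) (map (\<lambda>k. tr d k (Suc k) 0) [1..<m]) id" by (rule Suc.IH) (use False in simp)
    have L: "map (\<lambda>k. tr d k (Suc k) 0) [1..<Suc m] = map (\<lambda>k. tr d k (Suc k) 0) [1..<m] @ [tr d m (Suc m) 0]"
      using False by simp
    have "cyc d (Suc m) = foldr (\<circ>) (map (\<lambda>k. tr d k (Suc k) 0) [1..<m]) id \<circ> tr d m (Suc m) 0"
      using False by (simp only: cyc_Suc IH)
    also have "\<dots> = foldr (\<circ>) (map (\<lambda>k. tr d k (Suc k) 0) [1..<Suc m]) id"
      by (simp only: L foldr_snoc)
    finally show ?thesis .
  qed
qed

lemma cyc_refls: "d > 0 \<Longrightarrow> m \<le> n \<Longrightarrow> set (map (\<lambda>k. tr d k (Suc k) 0) [1..<m]) \<subseteq> reflections d n"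
  by (auto intro!: tr_refl)

lemma nat_mod_int: "nat ((int t + int s) mod int d) = (t + s) mod d"
  by (metis nat_int of_nat_add zmod_int)

lemma bcyc_single: "bcyc d s [(a,0)] = (\<lambda>(k,t). if t < d \<and> k = a then (a, (t + s) mod d) else (k, t))"
proof
  fix x show "bcyc d s [(a,0)] x = (\<lambda>(k,t). if t < d \<and> k = a then (a, (t + s) mod d) else (k, t)) x"
  proof (cases x)
    case (Pair k t)
    have L: "(LEAST i. i < Suc 0 \<and> a = k) = 0" if "a = k" using that by simp
    show ?thesis using Pair L by (simp add: bcyc_def Let_def nat_mod_int)
  qed
qed

lemma bcyc_long:
  assumes n: "n \<ge> 2"
  shows "bcyc d 1 (map (\<lambda>k. (k,0)) [1..<n]) = (\<lambda>(k,t). if t < d \<and> 1 \<le> k \<and> k < n - 1 then (Suc k, t)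
     else if t < d \<and> k = n - 1 then (1, (t + 1) mod d) else (k, t))"
proof
  define ks where "ks = map (\<lambda>k. (k::nat, 0::nat)) [1..<n]"
  have len: "length ks = n - 1" by (simp add: ks_def)
  have nth: "ks ! i = (Suc i, 0)" if "i < n - 1" for i using that by (simp add: ks_def)
  fix x show "bcyc d 1 ks x = (\<lambda>(k,t). if t < d \<and> 1 \<le> k \<and> k < n - 1 then (Suc k, t)
     else if t < d \<and> k = n - 1 then (1, (t + 1) mod d) else (k, t)) x"
  proof (cases x)
    case (Pair k t)
    show ?thesis
    proof (cases "t < d \<and> 1 \<le> k \<and> k \<le> n - 1")
      case True
      have ex: "\<exists>i<length ks. fst (ks ! i) = k" using True len nth by (intro exI[of _ "k - 1"]) auto
      have le: "(LEAST i. i < length ks \<and> fst (ks ! i) = k) = k - 1"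
        by (rule Least_equality) (use True len nth in auto)
      have "k - 1 < n - 1" using True by linarith
      then have km: "ks ! (k - 1) = (k, 0)" using nth[of "k - 1"] True by simp
      have tt: "nat (int t mod int d) = t" using True by (simp add: zmod_int[symmetric])
      show ?thesis
      proof (cases "k < n - 1")
        case True2: True
        have "Suc (k - 1) mod length ks = k" using True True2 len by simp
        moreover have "Suc (k - 1) \<noteq> length ks" using True True2 len by simp
        ultimately show ?thesis using Pair True True2 ex le nth[of k] km tt len
          by (simp add: bcyc_def Let_def)
      next
        case False
        then have kk: "k = n - 1" using True by simp
        have sk: "Suc (k - 1) = length ks" using True kk len n by simp
        then have "Suc (k - 1) mod length ks = 0" by simp
        moreover note sk
        moreover have "nat ((int t + 1) mod int d) = (t + 1) mod d" using nat_mod_int[of t 1 d] by simp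
        ultimately show ?thesis using Pair True kk ex le nth[of 0] km len n
          by (simp add: bcyc_def Let_def)
      qed
    next
      case False
      have "\<not> (t < d \<and> (\<exists>i<length ks. fst (ks ! i) = k))"
        using False len nth by auto
      then show ?thesis using Pair False n by (auto simp: bcyc_def)
    qed
  qed
qed

definition gex :: "nat \<Rightarrow> nat \<Rightarrow> nat \<times> nat \<Rightarrow> nat \<times> nat" where
  "gex d n = (\<lambda>(k,t). if t < d \<and> 1 \<le> k \<and> k < n - 1 then (Suc k, t)
     else if t < d \<and> k = n - 1 then (1, (t + 1) mod d)
     else if t < d \<and> k = n then (n, (t + d - 1) mod d) else (k, t))"

lemma gamma_ex:
  assumes n: "n \<ge> 2" and d: "d \<ge> 2"
  shows "bcyc d 1 (map (\<lambda>k. (k,0)) [1..<n]) \<circ> bcyc d (d - 1) [(n,0)] = gex d n"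
proof -
  have "bcyc d 1 (map (\<lambda>k. (k,0)) [1..<n]) \<circ> bcyc d (d - 1) [(n,0)] =
     (\<lambda>(k,t). if t < d \<and> 1 \<le> k \<and> k < n - 1 then (Suc k, t)
     else if t < d \<and> k = n - 1 then (1, (t + 1) mod d) else (k, t)) \<circ>
     (\<lambda>(k,t). if t < d \<and> k = n then (n, (t + (d - 1)) mod d) else (k, t))"
    by (simp only: bcyc_long[OF n] bcyc_single)
  also have "\<dots> = gex d n"
  proof
    fix x show "((\<lambda>(k,t). if t < d \<and> 1 \<le> k \<and> k < n - 1 then (Suc k, t)
     else if t < d \<and> k = n - 1 then (1, (t + 1) mod d) else (k, t)) \<circ>
     (\<lambda>(k,t). if t < d \<and> k = n then (n, (t + (d - 1)) mod d) else (k, t))) x = gex d n x"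
    proof (cases x)
      case (Pair k t)
      have e: "t + (d - 1) = t + d - 1" using d by simp
      have m: "(t + d - 1) mod d < d" using d by simp
      show ?thesis
      proof (cases "t < d \<and> k = n")
        case True
        have "n \<noteq> n - 1" "\<not> n < n - 1" using n by auto
        then show ?thesis using True Pair n m e by (simp add: gex_def)
      next
        case False then show ?thesis using Pair n by (auto simp: gex_def)
      qed
    qed
  qed
  finally show ?thesis .
qed

lemma gamma_fact:
  assumes n: "n \<ge> 2" and d: "d \<ge> 2"
  shows "gex d n = tr d 1 n 0 \<circ> tr d 1 n 1 \<circ> cyc d (n - 1)"
proof
  fix x show "gex d n x = (tr d 1 n 0 \<circ> tr d 1 n 1 \<circ> cyc d (n - 1)) x"
  proof (cases x)
    case (Pair k t)
    show ?thesis
    proof (cases "t < d")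
      case False then show ?thesis using Pair by (simp add: gex_def tr_def cyc_def)
    next
      case True
      have m1: "(t + 1) mod d < d" "(t + d - 1) mod d < d" using d by auto
      have m2: "((t + 1) mod d + d) mod d = (t + 1) mod d" using m1 by (simp add: mod_add_d)
      have m3: "(t + d - 1) mod d mod d = (t + d - 1) mod d" by simp
      show ?thesis
      proof (cases "1 \<le> k \<and> k < n - 1")
        case True2: True
        then have "Suc k \<noteq> n" "Suc k \<noteq> 1" by auto
        then show ?thesis using Pair True True2 n by (simp add: gex_def tr_def cyc_def)
      next
        case F2: False
        show ?thesis
        proof (cases "k = n - 1")
          case True3: True then show ?thesis using Pair True n m1 m2 by (simp add: gex_def tr_def cyc_def)
        next
          case F3: False
          show ?thesis
          proof (cases "k = n")
            case True4: True
            have "n \<noteq> n - 1" "\<not> n < n - 1" using n by auto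
            then show ?thesis using True4 Pair True n m1 m3 by (simp add: gex_def tr_def cyc_def)
          next
            case F4: False
            then show ?thesis using Pair True n F2 F3 by (auto simp: gex_def tr_def cyc_def)
          qed
        qed
      qed
    qed
  qed
qed

lemma u_fact:
  assumes "a \<noteq> 1" "s < d" "d > 0"
  shows "bcyc d s [(1,0)] \<circ> bcyc d (d - s) [(a,0)] = tr d 1 a 0 \<circ> tr d 1 a s"
proof
  fix x show "(bcyc d s [(1,0)] \<circ> bcyc d (d - s) [(a,0)]) x = (tr d 1 a 0 \<circ> tr d 1 a s) x"
  proof (cases x)
    case (Pair k t)
    show ?thesis
    proof (cases "t < d")
      case False then show ?thesis using Pair by (simp add: bcyc_single tr_def)
    next
      case True
      have e: "t + (d - s) = t + d - s" using assms by simp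
      have m1: "(t + s) mod d < d" "(t + d - s) mod d < d" using assms by auto
      have m2: "((t + s) mod d + d) mod d = (t + s) mod d" using m1 by (simp add: mod_add_d)
      show ?thesis using Pair True assms e m1 m2 by (auto simp: bcyc_single tr_def)
    qed
  qed
qed

lemma div_eq_self: "(x::complex) / z = x \<Longrightarrow> z \<noteq> 1 \<Longrightarrow> z \<noteq> 0 \<Longrightarrow> x = 0"
proof -
  assume h: "x / z = x" "z \<noteq> 1" "z \<noteq> 0"
  then have "x = x * z" by (metis nonzero_eq_divide_eq)
  then have "x * (z - 1) = 0" by (simp add: algebra_simps)
  then show "x = 0" using h(2) by simp
qed

lemma FF_app: "FF d v \<circ> w = FF d v \<Longrightarrow> v (fst (w (k, t))) / zeta d ^ snd (w (k, t)) = v k / zeta d ^ t"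
proof -
  assume "FF d v \<circ> w = FF d v"
  then have "FF d v (w (k, t)) = FF d v (k, t)" by (metis comp_apply)
  then show ?thesis by (simp add: FF_def split: prod.splits)
qed

lemma gex_nofix:
  assumes n: "n \<ge> 2" and d: "d \<ge> 2" and h: "FF d v \<circ> gex d n = FF d v"
  shows "\<forall>k\<in>{1..n}. v k = 0"
proof -
  have h1: "v (Suc k) = v k" if "1 \<le> k" "k < n - 1" for k
    using FF_app[OF h, of k 0] that d by (simp add: gex_def)
  have h2: "v 1 / zeta d = v (n - 1)"
    using FF_app[OF h, of "n - 1" 0] n d by (simp add: gex_def)
  have "v n / zeta d ^ (d - 1) = v n"
  proof -
    have "\<not> n < n - 1" "n \<noteq> n - 1" "(d - 1) mod d = d - 1" using n d by auto
    then show ?thesis using FF_app[OF h, of n 0] n d by (simp add: gex_def)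
  qed
  then have vn: "v n = 0" using div_eq_self zeta_ne1[of "d - 1" d] zeta_nz d by auto
  have ch: "1 \<le> k \<Longrightarrow> k \<le> n - 1 \<Longrightarrow> v k = v 1" for k
  proof (induction k)
    case 0 then show ?case by simp
  next
    case (Suc k)
    show ?case
    proof (cases "k = 0")
      case True then show ?thesis by simp
    next
      case False then show ?thesis using Suc h1[of k] by simp
    qed
  qed
  have "v 1 / zeta d = v 1" using h2 ch[of "n - 1"] n by simp
  then have v1: "v 1 = 0" using div_eq_self zeta_ne1[of 1 d] zeta_nz d by auto
  show ?thesis
  proof
    fix k assume k: "k \<in> {1..n}"
    show "v k = 0"
    proof (cases "k = n")
      case True then show ?thesis using vn by simp
    next
      case False
      then have "k \<le> n - 1" using k by auto
      then show ?thesis using ch[of k] k v1 by simp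
    qed
  qed
qed

lemma w_nofix:
  assumes n: "n \<ge> 2" and d: "d \<ge> 2" and a: "1 < a" "a \<le> n" and s: "1 \<le> s" "s \<le> d - 1"
    and bad: "\<not> (a = n \<and> s = 1)"
    and h: "FF d v \<circ> (tr d 1 a s \<circ> tr d 1 a 0 \<circ> gex d n) = FF d v"
  shows "\<forall>k\<in>{1..n}. v k = 0"
proof -
  have dm0: "(d - 1) mod d = d - 1" "0 < d" "s mod d = s" using d s by auto
  have "(d - 1 + d) mod d = d - 1" using mod_add_d[of "d - 1" d] d by simp
  note dm = dm0 this
  have h1: "v (Suc k) / zeta d ^ (if Suc k = a then s else 0) = v k" if "1 \<le> k" "k < n - 1" for k
  proof (cases "Suc k = a")
    case True
    then show ?thesis using FF_app[OF h, of k 0] that dm a by (simp add: gex_def tr_def)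
  next
    case False
    then show ?thesis using FF_app[OF h, of k 0] that dm a by (simp add: gex_def tr_def)
  qed
  have h2: "v 1 / zeta d ^ (1 + d - s) = v (n - 1)"
  proof -
    have "1 mod d = 1" "(1 + d - s) mod d < d" using d by auto
    then have "v 1 / zeta d ^ ((1 + d - s) mod d) = v (n - 1)"
      using FF_app[OF h, of "n - 1" 0] n dm a d by (simp add: gex_def tr_def)
    then show ?thesis using dm by (simp add: zeta_pow_mod)
  qed
  have nn: "\<not> n < n - 1" "n \<noteq> n - 1" using n by auto
  have vn: "v n = 0"
  proof (cases "a = n")
    case True
    then have s2: "s \<noteq> 1" using bad by simp
    have "(d - 1 + s) mod d < d" using d by simp
    then have "v n / zeta d ^ ((d - 1 + s) mod d) = v n"
      using FF_app[OF h, of n 0] True nn dm n d by (simp add: gex_def tr_def)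
    moreover have "(d - 1 + s) mod d = s - 1"
    proof -
      have e: "d - 1 + s = (s - 1) + d" using s d by simp
      have "s - 1 < d" using s d by simp
      then show ?thesis by (simp only: e mod_add_d)
    qed
    ultimately have "v n / zeta d ^ (s - 1) = v n" by simp
    then show ?thesis using div_eq_self zeta_ne1[of "s - 1" d] zeta_nz s s2 d by auto
  next
    case False
    then have "v n / zeta d ^ (d - 1) = v n"
      using FF_app[OF h, of n 0] nn dm a n d by (simp add: gex_def tr_def)
    then show ?thesis using div_eq_self zeta_ne1[of "d - 1" d] zeta_nz d by auto
  qed
  have v1: "v 1 = 0"
  proof (cases "a = n")
    case True
    have ch: "1 \<le> k \<Longrightarrow> k \<le> n - 1 \<Longrightarrow> v k = v 1" for k
    proof (induction k)
      case 0 then show ?case by simp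
    next
      case (Suc k)
      show ?case
      proof (cases "k = 0")
        case True then show ?thesis by simp
      next
        case False
        then have "Suc k \<noteq> a" using Suc.prems True by simp
        then show ?thesis using Suc h1[of k] False by simp
      qed
    qed
    have "v 1 / zeta d ^ (1 + d - s) = v 1" using h2 ch[of "n - 1"] n by simp
    moreover have "1 + d - s < d" "0 < 1 + d - s" using True bad s d by auto
    ultimately show ?thesis using div_eq_self zeta_ne1[of "1 + d - s" d] zeta_nz by auto
  next
    case False
    have ch: "1 \<le> k \<Longrightarrow> k \<le> n - 1 \<Longrightarrow> v k = v 1 * (if a \<le> k then zeta d ^ s else 1)" for k
    proof (induction k)
      case 0 then show ?case by simp
    next
      case (Suc k)
      show ?case
      proof (cases "k = 0")
        case True then show ?thesis using a by simp
      next
        case k0: False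
        have IH: "v k = v 1 * (if a \<le> k then zeta d ^ s else 1)" using Suc k0 by simp
        have e: "v (Suc k) = v k * zeta d ^ (if Suc k = a then s else 0)"
          using h1[of k] Suc.prems k0 zeta_nz by (simp add: field_simps)
        show ?thesis
        proof (cases "Suc k = a")
          case True then show ?thesis using IH e by simp
        next
          case False then show ?thesis using IH e by auto
        qed
      qed
    qed
    have "v (n - 1) = v 1 * zeta d ^ s" using ch[of "n - 1"] n a False by simp
    with h2 have "v 1 / zeta d ^ (1 + d - s) = v 1 * zeta d ^ s" by simp
    then have "v 1 = v 1 * (zeta d ^ s * zeta d ^ (1 + d - s))" using zeta_nz by (simp add: field_simps)
    also have "zeta d ^ s * zeta d ^ (1 + d - s) = zeta d ^ d * zeta d"
    proof -
      have "s + (1 + d - s) = d + 1" using s d by simp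
      then show ?thesis by (metis power_add power_one_right)
    qed
    finally have "v 1 = v 1 * zeta d" using zeta_pow_d d by simp
    then have "v 1 / zeta d = v 1" using zeta_nz by (simp add: field_simps)
    then show ?thesis using div_eq_self zeta_ne1[of 1 d] zeta_nz d by auto
  qed
  have rest: "v k = 0" if "1 \<le> k" "k \<le> n - 1" for k
    using that
  proof (induction k)
    case 0 then show ?case by simp
  next
    case (Suc k)
    show ?case
    proof (cases "k = 0")
      case True then show ?thesis using v1 by simp
    next
      case False
      then have "v k = 0" using Suc by simp
      then show ?thesis using h1[of k] Suc.prems False zeta_nz by simp
    qed
  qed
  show ?thesis
  proof
    fix k assume k: "k \<in> {1..n}"
    show "v k = 0"
    proof (cases "k = n")
      case True then show ?thesis using vn by simp
    next
      case False
      then have "k \<le> n - 1" using k by auto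
      then show ?thesis using rest[of k] k by simp
    qed
  qed
qed

lemma foldr_cons_id: "foldr (\<circ>) (x # xs) id = x \<circ> foldr (\<circ>) xs id" by simp

theorem lemmaA2:
  fixes d n a s :: nat
  assumes "d \<ge> 2" and "n \<ge> 2" and "1 < a" and "a \<le> n" and "1 \<le> s" and "s \<le> d - 1"
  shows "abs_le d n (bcyc d s [(1, 0)] \<circ> bcyc d (d - s) [(a, 0)])
           (bcyc d 1 (map (\<lambda>k. (k, 0)) [1..<n]) \<circ> bcyc d (d - 1) [(n, 0)])
         \<longleftrightarrow> (a = n \<and> s = 1)"
proof -
  have d0: "d > 0" and sd: "s < d" and a1: "a \<noteq> 1" using assms by auto
  define A where "A = tr d 1 a 0"
  define B where "B = tr d 1 a s"
  define C where "C = cyc d (n - 1)"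
  define CL where "CL = map (\<lambda>k. tr d k (Suc k) 0) [1..<n - 1]"
  define GL where "GL = tr d 1 n 0 # tr d 1 n 1 # CL"
  have U: "bcyc d s [(1, 0)] \<circ> bcyc d (d - s) [(a, 0)] = A \<circ> B"
    unfolding A_def B_def using u_fact[OF a1 sd d0] .
  have G: "bcyc d 1 (map (\<lambda>k. (k, 0)) [1..<n]) \<circ> bcyc d (d - 1) [(n, 0)] = gex d n"
    using gamma_ex assms by blast
  have rA: "A \<in> reflections d n" unfolding A_def using assms by (intro tr_refl) auto
  have rB: "B \<in> reflections d n" unfolding B_def using assms by (intro tr_refl) auto
  have rCL: "set CL \<subseteq> reflections d n" unfolding CL_def using cyc_refls[OF d0, of "n - 1" n] by simp
  have rGL: "set GL \<subseteq> reflections d n" unfolding GL_def using rCL assms by (auto intro!: tr_refl)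
  have lCL: "length CL = n - 2" by (simp add: CL_def)
  have lGL: "length GL = n" using lCL assms by (simp add: GL_def)
  have Cf: "C = foldr (\<circ>) CL id" unfolding C_def CL_def using cyc_fold[of "n - 1" d] assms by simp
  have Gf: "gex d n = foldr (\<circ>) GL id"
    unfolding GL_def by (simp only: foldr_cons_id gamma_fact[OF assms(2,1)] Cf[symmetric] C_def o_assoc)
  have AA: "A \<circ> A = id" unfolding A_def using tr_inv[OF d0 d0] a1 by simp
  have BB: "B \<circ> B = id" unfolding B_def using tr_inv[OF d0 sd] a1 by simp
  have id1: "A \<circ> B \<circ> (B \<circ> A) = id"
  proof -
    have "A \<circ> B \<circ> (B \<circ> A) = A \<circ> (B \<circ> B) \<circ> A" by (simp only: o_assoc)
    also have "\<dots> = id" by (simp only: BB AA comp_id)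
    finally show ?thesis .
  qed
  have id2: "B \<circ> A \<circ> (A \<circ> B) = id"
  proof -
    have "B \<circ> A \<circ> (A \<circ> B) = B \<circ> (A \<circ> A) \<circ> B" by (simp only: o_assoc)
    also have "\<dots> = id" by (simp only: BB AA comp_id)
    finally show ?thesis .
  qed
  have invU: "inv (A \<circ> B) = B \<circ> A" by (rule inv_unique_comp[OF id1 id2])
  have exG: "expr d n (gex d n)" unfolding expr_def using rGL Gf by blast
  have exU: "expr d n (A \<circ> B)" unfolding expr_def using rA rB
    by (intro exI[of _ "[A, B]"]) (simp add: fun_eq_iff)
  have WL: "B \<circ> A \<circ> gex d n = foldr (\<circ>) (B # A # GL) id"
    by (simp only: foldr_cons_id Gf o_assoc)
  have exW: "expr d n (B \<circ> A \<circ> gex d n)" unfolding expr_def using rA rB rGL WL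
    by (intro exI[of _ "B # A # GL"]) auto
  have Gle: "abs_len d n (gex d n) \<le> n" using abs_len_le[OF rGL Gf] lGL by simp
  have Gge: "n \<le> abs_len d n (gex d n)"
    by (rule abs_len_ge[OF exG d0]) (rule gex_nofix[OF assms(2,1)])
  have split: "abs_len d n (gex d n) \<le> abs_len d n (A \<circ> B) + abs_len d n (B \<circ> A \<circ> gex d n)"
  proof -
    have "A \<circ> B \<circ> (B \<circ> A \<circ> gex d n) = (A \<circ> B \<circ> (B \<circ> A)) \<circ> gex d n" by (simp only: o_assoc)
    then have "A \<circ> B \<circ> (B \<circ> A \<circ> gex d n) = gex d n" by (simp only: id1 id_comp)
    then show ?thesis using abs_len_sub[OF exU exW] by simp
  qed
  show ?thesis
  proof
    assume le: "abs_le d n (bcyc d s [(1, 0)] \<circ> bcyc d (d - s) [(a, 0)])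
           (bcyc d 1 (map (\<lambda>k. (k, 0)) [1..<n]) \<circ> bcyc d (d - 1) [(n, 0)])"
    show "a = n \<and> s = 1"
    proof (rule ccontr)
      assume bad: "\<not> (a = n \<and> s = 1)"
      have Wge: "n \<le> abs_len d n (B \<circ> A \<circ> gex d n)"
        by (rule abs_len_ge[OF exW d0]) (rule w_nofix[OF assms(2,1,3,4,5,6) bad], simp add: A_def B_def)
      have "A \<circ> B \<noteq> id"
      proof
        assume "A \<circ> B = id"
        then have "(A \<circ> B) (1, 0) = (1, 0)" by simp
        moreover have "(A \<circ> B) (1, 0) = (1, s)"
          using assms sd a1 by (simp add: A_def B_def tr_def mod_add_d)
        ultimately show False using assms by simp
      qed
      then have Upos: "1 \<le> abs_len d n (A \<circ> B)" using abs_len_pos[OF exU] by simp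
      from le have "abs_len d n (gex d n) = abs_len d n (A \<circ> B) + abs_len d n (B \<circ> A \<circ> gex d n)"
        unfolding abs_le_def U G invU by (simp add: o_assoc)
      then show False using Gle Wge Upos by linarith
    qed
  next
    assume good: "a = n \<and> s = 1"
    have "B \<circ> A \<circ> gex d n = C"
    proof -
      have "gex d n = A \<circ> B \<circ> C" using good unfolding A_def B_def C_def
        by (simp add: gamma_fact[OF assms(2,1)])
      then have "B \<circ> A \<circ> gex d n = (B \<circ> A \<circ> (A \<circ> B)) \<circ> C" by (simp only: o_assoc)
      also have "\<dots> = C" by (simp only: id2 id_comp)
      finally show ?thesis .
    qed
    then have Wle: "abs_len d n (B \<circ> A \<circ> gex d n) \<le> n - 2" using abs_len_le[OF rCL Cf] lCL by simp
    have Ule: "abs_len d n (A \<circ> B) \<le> 2"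
      using abs_len_le[of "[A, B]" d n "A \<circ> B"] rA rB by (simp add: fun_eq_iff)
    have "abs_len d n (gex d n) = abs_len d n (A \<circ> B) + abs_len d n (B \<circ> A \<circ> gex d n)"
      using Gge split Wle Ule assms by linarith
    then show "abs_le d n (bcyc d s [(1, 0)] \<circ> bcyc d (d - s) [(a, 0)])
           (bcyc d 1 (map (\<lambda>k. (k, 0)) [1..<n]) \<circ> bcyc d (d - 1) [(n, 0)])"
      unfolding abs_le_def U G invU by (simp add: o_assoc)
  qed
qed

end
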